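(* Let $G=(V,E)$ be a simple cubic bipartite graph that has no potential 4-cycles, let $F_1$ be a 2-factor of $G$ all of whose cycles are chordless, and let $F_2$ be a 2-factor that is locally optimal with respect to $F_1$. Then for every cycle $C$ of $(V,F_1)$ there exists a cycle $D$ of $(V,F_2)$ with $|V(D)|\ge 10$ and $|V(C)\cap V(D)|\ge 4$.
   Context: A 2-factor of a graph $G=(V,E)$ is a set $F\subseteq E$ such that every node is incident to exactly two edges of $F$; the components of $(V,F)$ are simple cycles; for a cycle $C$, $V(C)$ and $E(C)$ denote its node and edge sets. A set $S$ of 4 nodes is a potential 4-cycle if some 2-factor of $G$ has a cycle with node set exactly $S$. For a 2-factor $F_1$, an edge $\{x,y\}$ is a chord of a cycle $C$ of $(V,F_1)$ if $x,y\in V(C)$ and $\{x,y\}\in E\setminus F_1$; $C$ is chordless if it has no chord. A 2-factor $F_2$ is locally optimal with respect to $F_1$ if $E\setminus F_1\subseteq F_2$ and for each cycle $C$ of $(V,F_1)$, the number of components of $(V,F_2\triangle E(C))$ is not smaller than the number of components of $(V,F_2)$ ($\triangle$ is symmetric difference). A graph is cubic if every node has degree exactly 3. *)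

theory Defs
  imports Main
begin

definition simple_graph :: "'a set \<Rightarrow> 'a set set \<Rightarrow> bool" where
  "simple_graph V E \<longleftrightarrow> finite V \<and>
     (\<forall>e\<in>E. \<exists>x y. x \<noteq> y \<and> x \<in> V \<and> y \<in> V \<and> e = {x, y})"

definition degree :: "'a set set \<Rightarrow> 'a \<Rightarrow> nat" where
  "degree F v = card {e\<in>F. v \<in> e}"

definition cubic :: "'a set \<Rightarrow> 'a set set \<Rightarrow> bool" where
  "cubic V E \<longleftrightarrow> (\<forall>v\<in>V. degree E v = 3)"

definition bipartite :: "'a set \<Rightarrow> 'a set set \<Rightarrow> bool" where
  "bipartite V E \<longleftrightarrow> (\<exists>A\<subseteq>V. \<forall>e\<in>E. card (e \<inter> A) = 1)"

definition two_factor :: "'a set \<Rightarrow> 'a set set \<Rightarrow> 'a set set \<Rightarrow> bool" where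
  "two_factor V E F \<longleftrightarrow> F \<subseteq> E \<and> (\<forall>v\<in>V. degree F v = 2)"

definition adj :: "'a set set \<Rightarrow> 'a \<Rightarrow> 'a \<Rightarrow> bool" where
  "adj F x y \<longleftrightarrow> {x, y} \<in> F"

definition components :: "'a set \<Rightarrow> 'a set set \<Rightarrow> 'a set set" where
  "components V F = {{u\<in>V. (adj F)\<^sup>*\<^sup>* v u} | v. v \<in> V}"

definition comp_edges :: "'a set set \<Rightarrow> 'a set \<Rightarrow> 'a set set" where
  "comp_edges F C = {e\<in>F. e \<subseteq> C}"

definition potential_4_cycle :: "'a set \<Rightarrow> 'a set set \<Rightarrow> 'a set \<Rightarrow> bool" where
  "potential_4_cycle V E S \<longleftrightarrow> card S = 4 \<and>
     (\<exists>F. two_factor V E F \<and> S \<in> components V F)"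

definition chordless :: "'a set set \<Rightarrow> 'a set set \<Rightarrow> 'a set \<Rightarrow> bool" where
  "chordless E F1 C \<longleftrightarrow> \<not> (\<exists>x y. x \<in> C \<and> y \<in> C \<and> {x, y} \<in> E - F1)"

definition locally_optimal :: "'a set \<Rightarrow> 'a set set \<Rightarrow> 'a set set \<Rightarrow> 'a set set \<Rightarrow> bool" where
  "locally_optimal V E F1 F2 \<longleftrightarrow> two_factor V E F2 \<and> E - F1 \<subseteq> F2 \<and>
     (\<forall>C\<in>components V F1.
        card (components V ((F2 - comp_edges F1 C) \<union> (comp_edges F1 C - F2)))
          \<ge> card (components V F2))"

end

theory Submission
  imports Defs
begin

definition orb :: "('a \<Rightarrow> 'a) \<Rightarrow> ('a \<Rightarrow> 'a) \<Rightarrow> 'a \<Rightarrow> 'a set" where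
  "orb m p x = range (\<lambda>i. ((p \<circ> m)^^i) x) \<union> range (\<lambda>i. m (((p \<circ> m)^^i) x))"

definition rel :: "'a set \<Rightarrow> ('a \<Rightarrow> 'a) \<Rightarrow> ('a \<Rightarrow> 'a) \<Rightarrow> 'a \<Rightarrow> 'a \<Rightarrow> bool" where
  "rel V m p a b \<longleftrightarrow> a \<in> V \<and> (b = m a \<or> b = p a)"

lemma even_card_inv:
  assumes "finite S" "\<forall>x\<in>S. f x \<in> S \<and> f x \<noteq> x \<and> f (f x) = x"
  shows "even (card S)"
  using assms
proof (induction "card S" arbitrary: S rule: less_induct)
  case less
  show ?case
  proof (cases "S = {}")
    case True then show ?thesis by simp
  next
    case False
    then obtain a where a: "a \<in> S" by blast
    have fa: "f a \<in> S" "f a \<noteq> a" using less.prems(2) a by auto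
    have sub: "{a, f a} \<subseteq> S" using fa a by auto
    have c2: "card {a, f a} = 2" using fa by simp
    have c: "card (S - {a, f a}) = card S - 2"
      using card_Diff_subset[OF _ sub] less.prems(1) c2 by (metis finite_subset sub)
    have cle: "2 \<le> card S" using card_mono[OF less.prems(1) sub] c2 by simp
    have cl: "\<forall>x\<in>S - {a, f a}. f x \<in> S - {a, f a} \<and> f x \<noteq> x \<and> f (f x) = x"
    proof
      fix x assume x: "x \<in> S - {a, f a}"
      have "f x \<noteq> a" using x less.prems(2) by (metis DiffE insertCI)
      moreover have "f x \<noteq> f a" using x less.prems(2) a by (metis DiffE insertCI)
      ultimately show "f x \<in> S - {a, f a} \<and> f x \<noteq> x \<and> f (f x) = x" using x less.prems(2) by blast
    qed
    have "even (card (S - {a, f a}))"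
      using less.hyps[of "S - {a, f a}"] c cle cl less.prems(1) by simp
    then show ?thesis using c cle by presburger
  qed
qed

locale inv2 =
  fixes V :: "'a set" and m p :: "'a \<Rightarrow> 'a"
  assumes fin: "finite V" and mm: "\<And>x. m (m x) = x" and pp: "\<And>x. p (p x) = x"
    and mV: "\<And>x. x \<in> V \<Longrightarrow> m x \<in> V" and pV: "\<And>x. x \<in> V \<Longrightarrow> p x \<in> V"
    and mfp: "\<And>x. x \<in> V \<Longrightarrow> m x \<noteq> x" and pfp: "\<And>x. x \<in> V \<Longrightarrow> p x \<noteq> x"
    and mp: "\<And>x. x \<in> V \<Longrightarrow> m x \<noteq> p x"
begin

lemma tV: "x \<in> V \<Longrightarrow> ((p \<circ> m)^^i) x \<in> V"
  by (induction i) (auto simp: mV pV)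

lemma inj_t: "inj (p \<circ> m)"
  by (metis inj_compose inj_on_inverseI mm pp)

lemma period: assumes "x \<in> V" shows "\<exists>j>0. ((p \<circ> m)^^j) x = x"
proof -
  let ?f = "\<lambda>i. ((p \<circ> m)^^i) x"
  have "?f ` {..card V} \<subseteq> V" using tV assms by auto
  hence "\<not> inj_on ?f {..card V}"
    using card_inj_on_le[of ?f "{..card V}" V] fin by auto
  then obtain a b where ab: "a \<le> card V" "b \<le> card V" "a \<noteq> b" "?f a = ?f b"
    unfolding inj_on_def by auto
  have key: "\<And>a b. a < b \<Longrightarrow> ?f a = ?f b \<Longrightarrow> ?f (b - a) = x"
  proof -
    fix a b :: nat assume "a < b" "?f a = ?f b"
    hence "((p \<circ> m)^^a) (((p \<circ> m)^^(b-a)) x) = ((p \<circ> m)^^a) x"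
      by (metis (no_types, lifting) comp_apply funpow_add le_add_diff_inverse less_imp_le)
    thus "?f (b - a) = x" using inj_fn[OF inj_t, of a] by (meson injD)
  qed
  show ?thesis
  proof (cases "a < b")
    case True thus ?thesis using key ab by (intro exI[of _ "b - a"]) auto
  next
    case False hence "b < a" using ab by auto
    thus ?thesis using key ab by (intro exI[of _ "a - b"]) auto
  qed
qed

lemma orbV: "x \<in> V \<Longrightarrow> orb m p x \<subseteq> V"
  unfolding orb_def using tV mV by auto

lemma x_orb: "x \<in> orb m p x"
  unfolding orb_def by (auto intro: range_eqI[of _ _ 0])

lemma orb_m: "y \<in> orb m p x \<Longrightarrow> m y \<in> orb m p x"
  unfolding orb_def using mm by auto

lemma t_orb: "((p \<circ> m)^^i) x \<in> orb m p x"
  unfolding orb_def by auto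

lemma mt_orb: "m (((p \<circ> m)^^i) x) \<in> orb m p x"
  unfolding orb_def by auto

lemma orb_p: assumes "x \<in> V" "y \<in> orb m p x" shows "p y \<in> orb m p x"
proof -
  obtain j where j: "j > 0" "((p \<circ> m)^^j) x = x" using period assms(1) by blast
  from assms(2) consider (a) i where "y = ((p \<circ> m)^^i) x" | (b) i where "y = m (((p \<circ> m)^^i) x)"
    unfolding orb_def by auto
  then show ?thesis
  proof cases
    case (a i)
    show ?thesis
    proof (cases i)
      case 0
      have "((p \<circ> m)^^j) x = p (m (((p \<circ> m)^^(j-1)) x))"
        using j(1) by (metis comp_apply Suc_diff_1 funpow.simps(2))
      hence "p x = m (((p \<circ> m)^^(j-1)) x)" using j pp by metis
      thus ?thesis using a 0 mt_orb by simp
    next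
      case (Suc k)
      hence "p y = m (((p \<circ> m)^^k) x)" using a pp by simp
      thus ?thesis using mt_orb by simp
    qed
  next
    case (b i)
    have "p y = ((p \<circ> m)^^(Suc i)) x" using b by simp
    thus ?thesis using t_orb by metis
  qed
qed

lemma rel_sym: "rel V m p a b \<Longrightarrow> rel V m p b a"
  unfolding rel_def using mm pp mV pV by auto

lemma comp_eq: assumes "x \<in> V" shows "{u\<in>V. (rel V m p)\<^sup>*\<^sup>* x u} = orb m p x"
proof
  show "{u\<in>V. (rel V m p)\<^sup>*\<^sup>* x u} \<subseteq> orb m p x"
  proof
    fix u assume "u \<in> {u\<in>V. (rel V m p)\<^sup>*\<^sup>* x u}"
    hence "(rel V m p)\<^sup>*\<^sup>* x u" by simp
    thus "u \<in> orb m p x"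
    proof (induction rule: rtranclp_induct)
      case base then show ?case by (rule x_orb)
    next
      case (step y z)
      then show ?case unfolding rel_def using orb_m orb_p assms by auto
    qed
  qed
next
  have A: "(rel V m p)\<^sup>*\<^sup>* x (((p \<circ> m)^^i) x)" for i
  proof (induction i)
    case 0 then show ?case by simp
  next
    case (Suc i)
    have r1: "rel V m p (((p \<circ> m)^^i) x) (m (((p \<circ> m)^^i) x))"
      unfolding rel_def using tV assms by auto
    have r2: "rel V m p (m (((p \<circ> m)^^i) x)) (((p \<circ> m)^^(Suc i)) x)"
      unfolding rel_def using tV assms mV by auto
    show ?case using Suc r1 r2 by (meson rtranclp.rtrancl_into_rtrancl)
  qed
  have B: "(rel V m p)\<^sup>*\<^sup>* x (m (((p \<circ> m)^^i) x))" for i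
  proof -
    have "rel V m p (((p \<circ> m)^^i) x) (m (((p \<circ> m)^^i) x))"
      unfolding rel_def using tV assms by auto
    thus ?thesis using A by (meson rtranclp.rtrancl_into_rtrancl)
  qed
  show "orb m p x \<subseteq> {u\<in>V. (rel V m p)\<^sup>*\<^sup>* x u}"
  proof
    fix u assume "u \<in> orb m p x"
    then obtain i where "u = ((p \<circ> m)^^i) x \<or> u = m (((p \<circ> m)^^i) x)" unfolding orb_def by blast
    thus "u \<in> {u\<in>V. (rel V m p)\<^sup>*\<^sup>* x u}" using A[of i] B[of i] tV[OF assms, of i] mV by auto
  qed
qed

lemma orb_same: assumes "x \<in> V" "u \<in> orb m p x" shows "orb m p u = orb m p x"
proof -
  have uV: "u \<in> V" using orbV assms by auto
  have xu: "(rel V m p)\<^sup>*\<^sup>* x u" using comp_eq assms by blast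
  have ux: "(rel V m p)\<^sup>*\<^sup>* u x"
    using xu by (induction rule: rtranclp_induct)
       (auto intro: converse_rtranclp_into_rtranclp rel_sym)
  have "{w\<in>V. (rel V m p)\<^sup>*\<^sup>* u w} = {w\<in>V. (rel V m p)\<^sup>*\<^sup>* x w}"
    using xu ux by (auto intro: rtranclp_trans)
  thus ?thesis using comp_eq assms(1) uV by simp
qed

lemma orb_disj: assumes "x \<in> V" "y \<in> V" "u \<in> orb m p x" "u \<in> orb m p y"
  shows "orb m p x = orb m p y"
  using orb_same assms by metis

lemma t_ne_m: "y \<in> V \<Longrightarrow> ((p \<circ> m)^^d) y \<noteq> m y"
proof (induction d arbitrary: y rule: less_induct)
  case (less d)
  show ?case
  proof (cases d)
    case 0 then show ?thesis using mfp[OF less.prems] by auto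
  next
    case (Suc d1)
    show ?thesis
    proof (cases d1)
      case 0 then show ?thesis using Suc pfp[OF mV[OF less.prems]] \<open>d = Suc d1\<close> by simp
    next
      case (Suc d2)
      show ?thesis
      proof
        assume h: "((p \<circ> m)^^d) y = m y"
        let ?w = "((p \<circ> m)^^(Suc d2)) y"
        have "p (m ?w) = m y" using h \<open>d = Suc d1\<close> Suc by simp
        hence "m ?w = p (m y)" using pp by metis
        hence "?w = m (p (m y))" using mm by metis
        moreover have "?w = ((p \<circ> m)^^d2) ((p \<circ> m) y)" by (metis comp_apply funpow_Suc_right)
        ultimately have E: "((p \<circ> m)^^d2) ((p \<circ> m) y) = m ((p \<circ> m) y)" by simp
        have yV: "(p \<circ> m) y \<in> V" using less.prems mV pV by simp
        have "((p \<circ> m)^^d2) ((p \<circ> m) y) \<noteq> m ((p \<circ> m) y)"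
          by (rule less.IH[OF _ yV]) (use \<open>d = Suc d1\<close> Suc in simp)
        thus False using E by contradiction
      qed
    qed
  qed
qed

lemma orb_4: assumes "p (m (p (m x))) = x"
  shows "orb m p x = {x, p (m x), m x, m (p (m x))}"
proof -
  have A: "((p \<circ> m)^^i) x \<in> {x, p (m x)}" for i
    by (induction i) (auto simp: assms)
  have "orb m p x \<subseteq> {x, p (m x), m x, m (p (m x))}"
  proof
    fix u assume "u \<in> orb m p x"
    then obtain i where "u = ((p \<circ> m)^^i) x \<or> u = m (((p \<circ> m)^^i) x)" unfolding orb_def by blast
    thus "u \<in> {x, p (m x), m x, m (p (m x))}" using A[of i] by auto
  qed
  moreover have "{x, p (m x), m x, m (p (m x))} \<subseteq> orb m p x"
    using x_orb[of x] orb_m[of x x] t_orb[of 1 x] mt_orb[of 1 x] by simp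
  ultimately show ?thesis by (rule equalityI)
qed


lemma sumcard: assumes "C \<subseteq> V" shows "(\<Sum>D\<in>(\<lambda>v. orb m p v) ` C. card (D \<inter> C)) = card C"
proof -
  have finC: "finite C" using assms fin finite_subset by blast
  have "card (\<Union>D\<in>(\<lambda>v. orb m p v) ` C. D \<inter> C) = (\<Sum>D\<in>(\<lambda>v. orb m p v) ` C. card (D \<inter> C))"
  proof (rule card_UN_disjoint)
    show "finite ((\<lambda>v. orb m p v) ` C)" using finC by simp
    show "\<forall>i\<in>(\<lambda>v. orb m p v) ` C. finite (i \<inter> C)" using finC by simp
    show "\<forall>i\<in>(\<lambda>v. orb m p v) ` C. \<forall>j\<in>(\<lambda>v. orb m p v) ` C. i \<noteq> j \<longrightarrow> i \<inter> C \<inter> (j \<inter> C) = {}"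
    proof (intro ballI impI)
      fix i j assume "i \<in> (\<lambda>v. orb m p v) ` C" "j \<in> (\<lambda>v. orb m p v) ` C" "i \<noteq> j"
      then obtain a b where ab: "a \<in> C" "b \<in> C" "i = orb m p a" "j = orb m p b" "i \<noteq> j" by blast
      show "i \<inter> C \<inter> (j \<inter> C) = {}"
      proof (rule ccontr)
        assume "i \<inter> C \<inter> (j \<inter> C) \<noteq> {}"
        then obtain u where "u \<in> i" "u \<in> j" by blast
        hence "i = j" using orb_disj[of a b u] ab assms by auto
        thus False using ab by simp
      qed
    qed
  qed
  moreover have "(\<Union>D\<in>(\<lambda>v. orb m p v) ` C. D \<inter> C) = C" using x_orb by blast
  ultimately show ?thesis by simp
qed

end


locale setting =
  fixes V :: "'a set" and E F1 F2 :: "'a set set"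
  assumes sg: "simple_graph V E" and cub: "cubic V E" and bip: "bipartite V E"
    and no4: "\<not> (\<exists>S. potential_4_cycle V E S)" and tf1: "two_factor V E F1"
    and chl: "\<forall>C\<in>components V F1. chordless E F1 C" and lo: "locally_optimal V E F1 F2"
begin

lemma finV: "finite V" using sg unfolding simple_graph_def by auto

lemma edgeE: "e \<in> E \<Longrightarrow> \<exists>x y. x \<noteq> y \<and> x\<in>V \<and> y\<in>V \<and> e = {x,y}"
  using sg unfolding simple_graph_def by auto

lemma edge_V: assumes "{x,y} \<in> E" shows "x \<in> V \<and> y \<in> V \<and> x \<noteq> y"
proof -
  obtain a b where "a \<noteq> b" "a\<in>V" "b\<in>V" "{x,y} = {a,b}" using edgeE[OF assms] by blast
  thus ?thesis by (metis doubleton_eq_iff)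
qed

lemma finE: "finite E"
proof -
  have "E \<subseteq> Pow V" using edgeE by blast
  thus ?thesis using finV finite_subset by blast
qed

lemma tf2: "two_factor V E F2" using lo unfolding locally_optimal_def by auto
lemma F1E: "F1 \<subseteq> E" using tf1 unfolding two_factor_def by auto
lemma F2E: "F2 \<subseteq> E" using tf2 unfolding two_factor_def by auto
lemma MF2: "E - F1 \<subseteq> F2" using lo unfolding locally_optimal_def by auto

lemma degE: "x \<in> V \<Longrightarrow> card {e\<in>E. x\<in>e} = 3" using cub unfolding cubic_def degree_def by auto
lemma deg1: "x \<in> V \<Longrightarrow> card {e\<in>F1. x\<in>e} = 2" using tf1 unfolding two_factor_def degree_def by auto
lemma deg2: "x \<in> V \<Longrightarrow> card {e\<in>F2. x\<in>e} = 2" using tf2 unfolding two_factor_def degree_def by auto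

lemma unique1: assumes "F \<subseteq> E" "card {e\<in>F. x\<in>e} = 1"
  shows "\<exists>y. {x,y} \<in> F \<and> (\<forall>z. {x,z} \<in> F \<longrightarrow> z = y)"
proof -
  obtain e0 where e0: "{e\<in>F. x\<in>e} = {e0}" using assms(2) card_1_singletonE by blast
  hence "e0 \<in> E" "x \<in> e0" using assms(1) by auto
  then obtain y where y: "e0 = {x,y}" using edgeE by blast
  have "{x,y} \<in> F" using e0 y by blast
  moreover have "\<forall>z. {x,z} \<in> F \<longrightarrow> z = y"
  proof (intro allI impI)
    fix z assume "{x,z} \<in> F"
    hence "{x,z} \<in> {e\<in>F. x\<in>e}" by simp
    hence "{x,z} = {x,y}" using e0 y by simp
    thus "z = y" by (metis doubleton_eq_iff)
  qed
  ultimately show ?thesis by blast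
qed

lemma cardM: assumes "x \<in> V" shows "card {e\<in>E - F1. x\<in>e} = 1"
proof -
  have eq: "{e\<in>E - F1. x\<in>e} = {e\<in>E. x\<in>e} - {e\<in>F1. x\<in>e}" by auto
  have sub: "{e\<in>F1. x\<in>e} \<subseteq> {e\<in>E. x\<in>e}" using F1E by auto
  have fin: "finite {e\<in>F1. x\<in>e}" by (rule finite_subset[OF _ finE]) (use F1E in auto)
  have "card ({e\<in>E. x\<in>e} - {e\<in>F1. x\<in>e}) = card {e\<in>E. x\<in>e} - card {e\<in>F1. x\<in>e}"
    by (rule card_Diff_subset[OF fin sub])
  also have "\<dots> = 1" using degE[OF assms] deg1[OF assms] by simp
  finally show ?thesis using eq by simp
qed

definition m where "m x = (if x \<in> V then (THE y. {x,y} \<in> E - F1) else x)"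

lemma m_char: assumes "x \<in> V" shows "{x,y} \<in> E - F1 \<longleftrightarrow> y = m x"
proof -
  obtain y0 where y0: "{x,y0} \<in> E - F1" "\<forall>z. {x,z} \<in> E - F1 \<longrightarrow> z = y0"
    using unique1[OF _ cardM[OF assms]] by blast
  have "(THE y. {x,y} \<in> E - F1) = y0" by (rule the_equality) (use y0 in blast)+
  hence e: "m x = y0" unfolding m_def using assms by simp
  show ?thesis
  proof
    assume "{x,y} \<in> E - F1" thus "y = m x" using y0(2) e by blast
  next
    assume "y = m x" thus "{x,y} \<in> E - F1" using y0(1) e by simp
  qed
qed

lemma mx: "x \<in> V \<Longrightarrow> {x, m x} \<in> E \<and> {x, m x} \<notin> F1" using m_char[of x "m x"] by simp

lemma cardN: assumes "x \<in> V" shows "card {e\<in>F2 \<inter> F1. x\<in>e} = 1"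
proof -
  have "{e\<in>F2 \<inter> F1. x\<in>e} = {e\<in>F2. x\<in>e} - {{x, m x}}"
  proof
    show "{e\<in>F2 \<inter> F1. x\<in>e} \<subseteq> {e\<in>F2. x\<in>e} - {{x, m x}}" using mx[OF assms] by auto
    show "{e\<in>F2. x\<in>e} - {{x, m x}} \<subseteq> {e\<in>F2 \<inter> F1. x\<in>e}"
    proof
      fix e assume e: "e \<in> {e\<in>F2. x\<in>e} - {{x, m x}}"
      then obtain y where y: "e = {x,y}" using edgeE F2E by blast
      have "e \<in> F1"
      proof (rule ccontr)
        assume "e \<notin> F1"
        hence "y = m x" using m_char[OF assms] y e F2E by auto
        thus False using e y by auto
      qed
      thus "e \<in> {e\<in>F2 \<inter> F1. x\<in>e}" using e by auto
    qed
  qed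
  moreover have "{x, m x} \<in> {e\<in>F2. x\<in>e}" using mx[OF assms] MF2 by auto
  moreover have "finite {e\<in>F2. x\<in>e}" by (rule finite_subset[OF _ finE]) (use F2E in auto)
  ultimately show ?thesis using deg2[OF assms] by simp
qed

definition n where "n x = (if x \<in> V then (THE y. {x,y} \<in> F2 \<inter> F1) else x)"

lemma n_char: assumes "x \<in> V" shows "{x,y} \<in> F2 \<inter> F1 \<longleftrightarrow> y = n x"
proof -
  obtain y0 where y0: "{x,y0} \<in> F2 \<inter> F1" "\<forall>z. {x,z} \<in> F2 \<inter> F1 \<longrightarrow> z = y0"
    using unique1[OF _ cardN[OF assms]] F2E by blast
  have "(THE y. {x,y} \<in> F2 \<inter> F1) = y0" by (rule the_equality) (use y0 in blast)+
  hence e: "n x = y0" unfolding n_def using assms by simp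
  show ?thesis
  proof
    assume "{x,y} \<in> F2 \<inter> F1" thus "y = n x" using y0(2) e by blast
  next
    assume "y = n x" thus "{x,y} \<in> F2 \<inter> F1" using y0(1) e by simp
  qed
qed

lemma nx: "x \<in> V \<Longrightarrow> {x, n x} \<in> F2 \<and> {x, n x} \<in> F1" using n_char[of x "n x"] by simp

lemma cardQ: assumes "x \<in> V" shows "card {e\<in>F1 - {{x, n x}}. x\<in>e} = 1"
proof -
  have "{e\<in>F1 - {{x, n x}}. x\<in>e} = {e\<in>F1. x\<in>e} - {{x, n x}}" by auto
  moreover have "{x, n x} \<in> {e\<in>F1. x\<in>e}" using nx[OF assms] by auto
  moreover have "finite {e\<in>F1. x\<in>e}" by (rule finite_subset[OF _ finE]) (use F1E in auto)
  ultimately show ?thesis using deg1[OF assms] by simp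
qed

definition q where "q x = (if x \<in> V then (THE y. {x,y} \<in> F1 - {{x, n x}}) else x)"

lemma q_char0: assumes "x \<in> V" shows "{x,y} \<in> F1 - {{x, n x}} \<longleftrightarrow> y = q x"
proof -
  obtain y0 where y0: "{x,y0} \<in> F1 - {{x, n x}}" "\<forall>z. {x,z} \<in> F1 - {{x, n x}} \<longrightarrow> z = y0"
    using unique1[OF _ cardQ[OF assms]] F1E by blast
  have "(THE y. {x,y} \<in> F1 - {{x, n x}}) = y0" by (rule the_equality) (use y0 in blast)+
  hence e: "q x = y0" unfolding q_def using assms by simp
  show ?thesis
  proof
    assume "{x,y} \<in> F1 - {{x, n x}}" thus "y = q x" using y0(2) e by blast
  next
    assume "y = q x" thus "{x,y} \<in> F1 - {{x, n x}}" using y0(1) e by simp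
  qed
qed

lemma q_char: assumes "x \<in> V" shows "{x,y} \<in> F1 \<and> y \<noteq> n x \<longleftrightarrow> y = q x"
proof -
  have "{x,y} = {x, n x} \<longleftrightarrow> y = n x" by (metis doubleton_eq_iff)
  thus ?thesis using q_char0[OF assms] by auto
qed

lemma F1_char: "x \<in> V \<Longrightarrow> {x,y} \<in> F1 \<longleftrightarrow> y = n x \<or> y = q x"
  using q_char[of x y] nx[of x] by blast

lemma F2_char: assumes "x \<in> V" shows "{x,y} \<in> F2 \<longleftrightarrow> y = m x \<or> y = n x"
proof
  assume h: "{x,y} \<in> F2"
  show "y = m x \<or> y = n x"
  proof (cases "{x,y} \<in> F1")
    case True thus ?thesis using n_char[OF assms] h by auto
  next
    case False thus ?thesis using m_char[OF assms] h F2E by auto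
  qed
next
  assume "y = m x \<or> y = n x" thus "{x,y} \<in> F2" using mx[OF assms] nx[OF assms] MF2 by auto
qed

lemma E_V: "{x,y} \<in> E \<Longrightarrow> y \<in> V" using edge_V by blast

lemma mV: "x \<in> V \<Longrightarrow> m x \<in> V" using mx[of x] E_V[of x "m x"] by simp
lemma nV: "x \<in> V \<Longrightarrow> n x \<in> V" using nx[of x] F1E E_V[of x "n x"] by auto
lemma qV: "x \<in> V \<Longrightarrow> q x \<in> V" using q_char[of x "q x"] F1E E_V[of x "q x"] by auto

lemma mfp: "x \<in> V \<Longrightarrow> m x \<noteq> x" using mx[of x] edge_V[of x "m x"] by auto
lemma nfp: "x \<in> V \<Longrightarrow> n x \<noteq> x" using nx[of x] F1E edge_V[of x "n x"] by auto
lemma qfp: "x \<in> V \<Longrightarrow> q x \<noteq> x" using q_char[of x "q x"] F1E edge_V[of x "q x"] by auto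

lemma mn: "x \<in> V \<Longrightarrow> m x \<noteq> n x" using mx[of x] nx[of x] by auto
lemma mq: "x \<in> V \<Longrightarrow> m x \<noteq> q x" using mx[of x] q_char[of x "q x"] by auto
lemma nq: "x \<in> V \<Longrightarrow> n x \<noteq> q x" using q_char[of x "q x"] by auto

lemma mm: "m (m x) = x"
proof (cases "x \<in> V")
  case True
  have "{m x, x} \<in> E - F1" using mx[OF True] by (simp add: insert_commute)
  thus ?thesis using m_char[OF mV[OF True]] by simp
next
  case False thus ?thesis by (simp add: m_def)
qed

lemma nn: "n (n x) = x"
proof (cases "x \<in> V")
  case True
  have "{n x, x} \<in> F2 \<inter> F1" using nx[OF True] by (simp add: insert_commute)
  thus ?thesis using n_char[OF nV[OF True]] by simp
next
  case False thus ?thesis by (simp add: n_def)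
qed

lemma qq: "q (q x) = x"
proof (cases "x \<in> V")
  case True
  have "{x, q x} \<in> F1" using q_char[OF True, of "q x"] by simp
  hence h: "{q x, x} \<in> F1" by (simp add: insert_commute)
  have "x \<noteq> n (q x)" using nn nq[OF True] by metis
  thus ?thesis using q_char[OF qV[OF True], of x] h by simp
next
  case False thus ?thesis by (simp add: q_def)
qed

lemma adj_char: assumes "\<And>x y. {x,y} \<in> F \<Longrightarrow> x \<in> V"
  and "\<And>x y. x \<in> V \<Longrightarrow> {x,y} \<in> F \<longleftrightarrow> y = a x \<or> y = b x"
  shows "adj F = rel V a b"
  unfolding adj_def rel_def using assms by (intro ext) blast

lemma adj2: "adj F2 = rel V m n"
  by (rule adj_char) (use F2E edge_V F2_char in blast)+

lemma adj1: "adj F1 = rel V n q"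
  by (rule adj_char) (use F1E edge_V F1_char in blast)+

sublocale I2: inv2 V m n
  by unfold_locales (auto simp: finV mm nn mV nV mfp nfp mn)

sublocale I1: inv2 V n q
  by unfold_locales (auto simp: finV qq nn qV nV qfp nfp nq)

lemma comps_eq: assumes "inv2 V a b" "adj F = rel V a b"
  shows "components V F = (\<lambda>v. orb a b v) ` V"
  unfolding components_def assms(2) using inv2.comp_eq[OF assms(1)] by auto

lemma comps2: "components V F2 = (\<lambda>v. orb m n v) ` V"
  by (rule comps_eq[OF _ adj2]) unfold_locales

lemma comps1: "components V F1 = (\<lambda>v. orb n q v) ` V"
  by (rule comps_eq[OF _ adj1]) unfold_locales

lemma not4: assumes "two_factor V E F" "S \<in> components V F" shows "card S \<noteq> 4"
  using no4 assms unfolding potential_4_cycle_def by blast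

end


context setting begin

lemma bipE: obtains A where "\<And>x y. {x,y} \<in> E \<Longrightarrow> (x \<in> A \<longleftrightarrow> y \<notin> A)"
proof -
  obtain A where A: "A \<subseteq> V" "\<forall>e\<in>E. card (e \<inter> A) = 1" using bip unfolding bipartite_def by blast
  have "(x \<in> A \<longleftrightarrow> y \<notin> A)" if e: "{x,y} \<in> E" for x y
  proof -
    have ne: "x \<noteq> y" using edge_V[OF e] by blast
    have "card ({x,y} \<inter> A) = 1" using A e by blast
    thus ?thesis using ne by (cases "x \<in> A"; cases "y \<in> A") auto
  qed
  thus ?thesis using that by blast
qed

lemma mE: "x \<in> V \<Longrightarrow> {x, m x} \<in> E" using mx by blast
lemma nE: "x \<in> V \<Longrightarrow> {x, n x} \<in> E" using nx F1E by blast
lemma qE: "x \<in> V \<Longrightarrow> {x, q x} \<in> E" using q_char[of x "q x"] F1E by auto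

end

locale withC = setting +
  fixes C
  assumes CinC: "C \<in> components V F1"
    and bad: "\<not> (\<exists>D\<in>components V F2. card D \<ge> 10 \<and> card (C \<inter> D) \<ge> 4)"
begin

lemma Cx0: "\<exists>x0\<in>V. C = orb n q x0" using CinC comps1 by auto
lemma CV: "C \<subseteq> V" using Cx0 I1.orbV by blast
lemma finC: "finite C" using CV finV finite_subset by blast
lemma nC: "x \<in> C \<Longrightarrow> n x \<in> C" using Cx0 I1.orb_m by blast
lemma qC: "x \<in> C \<Longrightarrow> q x \<in> C" using Cx0 I1.orb_p by blast
lemma nC': "x \<notin> C \<Longrightarrow> n x \<notin> C" using nC nn by metis
lemma qC': "x \<notin> C \<Longrightarrow> q x \<notin> C" using qC qq by metis
lemma mC: "x \<in> C \<Longrightarrow> m x \<notin> C"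
proof
  assume x: "x \<in> C" and mx': "m x \<in> C"
  have "chordless E F1 C" using chl CinC by blast
  moreover have "{x, m x} \<in> E - F1" using mx[of x] x CV by auto
  ultimately show False using x mx' unfolding chordless_def by blast
qed

definition n' where "n' x = (if x \<in> C then q x else n x)"

lemma n'n': "n' (n' x) = x" unfolding n'_def using qC nC' qq nn by auto
lemma n'V: "x \<in> V \<Longrightarrow> n' x \<in> V" unfolding n'_def using qV nV by auto
lemma n'fp: "x \<in> V \<Longrightarrow> n' x \<noteq> x" unfolding n'_def using qfp nfp by auto
lemma mn': "x \<in> V \<Longrightarrow> m x \<noteq> n' x" unfolding n'_def using mq mn by auto
lemma n'_C: "x \<in> C \<Longrightarrow> n' x = q x" unfolding n'_def by simp
lemma n'_nC: "x \<notin> C \<Longrightarrow> n' x = n x" unfolding n'_def by simp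

sublocale I2': inv2 V m n'
  by unfold_locales (auto simp: finV mm n'n' mV n'V mfp n'fp mn')

definition F2' where "F2' = (F2 - comp_edges F1 C) \<union> (comp_edges F1 C - F2)"

lemma F2'_E: "F2' \<subseteq> E" using F2E F1E unfolding F2'_def comp_edges_def by auto

lemma F2'_char: assumes x: "x \<in> V" shows "{x,y} \<in> F2' \<longleftrightarrow> y = m x \<or> y = n' x"
proof -
  have EC: "{x,y} \<in> comp_edges F1 C \<longleftrightarrow> (y = n x \<or> y = q x) \<and> x \<in> C"
    unfolding comp_edges_def using F1_char[OF x, of y] nC qC by auto
  show ?thesis using EC F2_char[OF x, of y] mn[OF x] mq[OF x] nq[OF x]
    unfolding F2'_def n'_def by auto
qed

lemma adj2': "adj F2' = rel V m n'"
  by (rule adj_char) (use F2'_E edge_V F2'_char in blast)+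

lemma comps2': "components V F2' = (\<lambda>v. orb m n' v) ` V"
  by (rule comps_eq[OF _ adj2']) unfold_locales

lemma tf2': "two_factor V E F2'"
  unfolding two_factor_def
proof (intro conjI ballI)
  show "F2' \<subseteq> E" by (rule F2'_E)
  fix v assume v: "v \<in> V"
  have "{e\<in>F2'. v\<in>e} = {{v, m v}, {v, n' v}}"
  proof
    show "{e\<in>F2'. v\<in>e} \<subseteq> {{v, m v}, {v, n' v}}"
    proof
      fix e assume e: "e \<in> {e\<in>F2'. v\<in>e}"
      then obtain a b where ab: "e = {a,b}" using edgeE F2'_E by blast
      then obtain y where y: "e = {v,y}" using e by auto
      hence "y = m v \<or> y = n' v" using F2'_char[OF v] e by auto
      thus "e \<in> {{v, m v}, {v, n' v}}" using y by auto
    qed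
    show "{{v, m v}, {v, n' v}} \<subseteq> {e\<in>F2'. v\<in>e}" using F2'_char[OF v] by auto
  qed
  moreover have "{v, m v} \<noteq> {v, n' v}" using mn'[OF v] by (metis doubleton_eq_iff)
  ultimately show "degree F2' v = 2" unfolding degree_def by simp
qed

lemma locopt: "card (components V F2) \<le> card (components V F2')"
  using lo CinC unfolding locally_optimal_def F2'_def by blast

lemma not4_2: "x \<in> V \<Longrightarrow> card (orb m n x) \<noteq> 4"
  using not4[OF tf2] comps2 by auto
lemma not4_2': "x \<in> V \<Longrightarrow> card (orb m n' x) \<noteq> 4"
  using not4[OF tf2'] comps2' by auto

definition P where "P x = m (n (m x))"

lemma DC_n: "x \<in> V \<Longrightarrow> y \<in> orb m n x \<inter> C \<Longrightarrow> n y \<in> orb m n x \<inter> C"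
  using I2.orb_p nC by blast

lemma even_DC: assumes "x \<in> V" shows "even (card (orb m n x \<inter> C))"
  by (rule even_card_inv[where f=n]) (use finC DC_n[OF assms] CV nfp nn in auto)

lemma even_DmC: assumes "x \<in> V" shows "even (card (orb m n x - C))"
  by (rule even_card_inv[where f=n])
     (use finV I2.orbV[OF assms] I2.orb_p[OF assms] nC' nfp nn in \<open>auto intro: finite_subset\<close>)

lemma D'C_q: "x \<in> V \<Longrightarrow> y \<in> orb m n' x \<inter> C \<Longrightarrow> q y \<in> orb m n' x \<inter> C"
  using I2'.orb_p[of x y] qC n'_C by auto

lemma even_D'C: assumes "x \<in> V" shows "even (card (orb m n' x \<inter> C))"
  by (rule even_card_inv[where f=q]) (use finC D'C_q[OF assms] CV qfp qq in auto)

lemma card_split: "finite D \<Longrightarrow> card D = card (D \<inter> C) + card (D - C)"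
  by (rule card_Int_Diff)

lemma finorb: "x \<in> V \<Longrightarrow> finite (orb m n x)" using I2.orbV finV finite_subset by blast
lemma finorb': "x \<in> V \<Longrightarrow> finite (orb m n' x)" using I2'.orbV finV finite_subset by blast

lemma m_img: assumes "x \<in> V" shows "m ` (orb m n x \<inter> C) \<subseteq> orb m n x - C"
  using I2.orb_m mC by auto

lemma inj_m: "inj m" by (metis injI mm)

lemma A2: assumes x: "x \<in> C" shows "card (orb m n x \<inter> C) \<le> 4"
proof (rule ccontr)
  assume h: "\<not> ?thesis"
  have xV: "x \<in> V" using x CV by blast
  have "card (m ` (orb m n x \<inter> C)) \<le> card (orb m n x - C)"
    using card_mono[OF _ m_img[OF xV]] finorb[OF xV] by simp
  hence "card (orb m n x \<inter> C) \<le> card (orb m n x - C)"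
    using card_image[OF inj_on_subset[OF inj_m]] by (metis subset_UNIV)
  hence "card (orb m n x) \<ge> 10" using card_split[OF finorb[OF xV]] h by simp
  moreover have "orb m n x \<in> components V F2" using comps2 xV by simp
  ultimately show False using bad h by (auto simp: Int_commute)
qed

lemma DC_sub: "x \<in> C \<Longrightarrow> {x, n x} \<subseteq> orb m n x \<inter> C"
  using I2.x_orb I2.orb_p CV nC by blast

lemma DC_24: assumes x: "x \<in> C" shows "card (orb m n x \<inter> C) = 2 \<or> card (orb m n x \<inter> C) = 4"
proof -
  have xV: "x \<in> V" using x CV by blast
  have "card {x, n x} \<le> card (orb m n x \<inter> C)"
    using card_mono[OF _ DC_sub[OF x]] finC by simp
  hence "2 \<le> card (orb m n x \<inter> C)" using nfp[OF xV] by simp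
  moreover have H: "\<And>c::nat. 2 \<le> c \<Longrightarrow> c \<le> 4 \<Longrightarrow> even c \<Longrightarrow> c = 2 \<or> c = 4" by presburger
  ultimately show ?thesis using A2[OF x] even_DC[OF xV] by blast
qed


lemma A4: assumes x: "x \<in> C" and c4: "card (orb m n x \<inter> C) = 4"
  shows "P x \<in> C \<and> P x \<in> orb m n x \<and> P x \<noteq> x \<and> P x \<noteq> n x"
proof -
  have xV: "x \<in> V" using x CV by blast
  let ?D = "orb m n x"
  have "?D \<in> components V F2" using comps2 xV by simp
  hence le9: "card ?D < 10" using bad c4 by (auto simp: Int_commute)
  hence "card (?D - C) \<le> 5" using card_split[OF finorb[OF xV]] c4 by simp
  moreover have "even (card (?D - C))" by (rule even_DmC[OF xV])
  moreover have H: "\<And>c::nat. c \<le> 5 \<Longrightarrow> even c \<Longrightarrow> c \<le> 4" by presburger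
  ultimately have le4: "card (?D - C) \<le> 4" by blast
  have ci: "card (m ` (?D \<inter> C)) = 4"
    using card_image[OF inj_on_subset[OF inj_m]] c4 by (metis subset_UNIV)
  have eqD: "m ` (?D \<inter> C) = ?D - C"
  proof (rule card_subset_eq)
    show "finite (?D - C)" using finorb[OF xV] by simp
    show "m ` (?D \<inter> C) \<subseteq> ?D - C" by (rule m_img[OF xV])
    show "card (m ` (?D \<inter> C)) = card (?D - C)"
      using ci le4 card_mono[OF _ m_img[OF xV]] finorb[OF xV] by simp
  qed
  have mxD: "m x \<in> ?D" using I2.orb_m I2.x_orb by blast
  have "n (m x) \<in> ?D - C" using I2.orb_p[OF xV mxD] nC' mC[OF x] by blast
  then obtain y where y: "y \<in> ?D \<inter> C" "n (m x) = m y" using eqD by force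
  hence Py: "P x = y" unfolding P_def using mm by simp
  have "P x \<noteq> x"
  proof
    assume "P x = x"
    hence "n (m x) = m x" unfolding P_def using mm by metis
    thus False using nfp[OF mV[OF xV]] by simp
  qed
  moreover have "P x \<noteq> n x"
  proof
    assume h: "P x = n x"
    hence "n (m (n (m x))) = x" unfolding P_def using nn by metis
    hence "orb m n x = {x, n (m x), m x, m (n (m x))}" by (rule I2.orb_4)
    also have "\<dots> = {x, n (m x), m x, n x}" using h unfolding P_def by simp
    finally have "card (orb m n x) = card {x, n (m x), m x, n x}" by simp
    moreover have "card {x, n (m x), m x, n x} = 4"
    proof -
      have "x \<noteq> n (m x)" using mn[OF xV] nn by metis
      moreover have "x \<noteq> m x" using mfp[OF xV] by metis
      moreover have "x \<noteq> n x" using nfp[OF xV] by metis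
      moreover have "n (m x) \<noteq> m x" using nfp[OF mV[OF xV]] by metis
      moreover have "n (m x) \<noteq> n x" using mfp[OF xV] nn by metis
      moreover have "m x \<noteq> n x" using mn[OF xV] by metis
      ultimately show ?thesis by simp
    qed
    ultimately show False using not4_2[OF xV] by simp
  qed
  ultimately show ?thesis using Py y by blast
qed

lemma PD': assumes x: "x \<in> C" shows "P x \<in> orb m n' x"
proof -
  have "n' (m x) = n (m x)" using n'_nC mC[OF x] by simp
  hence "P x = m (((n' \<circ> m)^^1) x)" unfolding P_def by simp
  thus ?thesis using I2'.mt_orb by metis
qed

lemma B_notq: assumes x: "x \<in> C" and c4: "card (orb m n x \<inter> C) = 4"
  shows "P x \<noteq> q x"
proof
  assume h: "P x = q x"
  have xV: "x \<in> V" using x CV by blast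
  have e1: "n' (m x) = n (m x)" using n'_nC mC[OF x] by simp
  have e2: "m (n' (m x)) = q x" using h e1 unfolding P_def by simp
  have "n' (m (n' (m x))) = x" using e2 n'_C qC[OF x] qq by simp
  hence "orb m n' x = {x, n' (m x), m x, m (n' (m x))}" by (rule I2'.orb_4)
  also have "\<dots> = {x, n (m x), m x, q x}" using e1 e2 by simp
  finally have "card (orb m n' x) = card {x, n (m x), m x, q x}" by simp
  moreover have "card {x, n (m x), m x, q x} = 4"
  proof -
    have nmC: "n (m x) \<notin> C" using nC' mC[OF x] by blast
    have "x \<noteq> n (m x)" using nmC x by metis
    moreover have "x \<noteq> m x" using mfp[OF xV] by metis
    moreover have "x \<noteq> q x" using qfp[OF xV] by metis
    moreover have "n (m x) \<noteq> m x" using nfp[OF mV[OF xV]] by metis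
    moreover have "n (m x) \<noteq> q x" using nmC qC[OF x] by metis
    moreover have "m x \<noteq> q x" using mq[OF xV] by metis
    ultimately show ?thesis by simp
  qed
  ultimately show False using not4_2'[OF xV] by simp
qed

lemma B: assumes x: "x \<in> C" shows "card (orb m n' x \<inter> C) \<ge> 4"
proof (rule ccontr)
  assume h: "\<not> ?thesis"
  have xV: "x \<in> V" using x CV by blast
  let ?S = "orb m n' x \<inter> C"
  have "n' x \<in> orb m n' x" using I2'.x_orb I2'.orb_p[OF xV] by blast
  hence sub: "{x, q x} \<subseteq> ?S" using I2'.x_orb n'_C[OF x] qC[OF x] x by auto
  have "card {x, q x} \<le> card ?S" using card_mono[OF _ sub] finC by simp
  hence "2 \<le> card ?S" using qfp[OF xV] by simp
  moreover have H: "\<And>c::nat. 2 \<le> c \<Longrightarrow> \<not> 4 \<le> c \<Longrightarrow> even c \<Longrightarrow> c = 2" by presburger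
  ultimately have "card ?S = 2" using h even_D'C[OF xV] by blast
  hence Seq: "?S = {x, q x}"
    using card_subset_eq[OF _ sub] finC qfp[OF xV] by (metis card_2_iff finite_Int)
  from DC_24[OF x] show False
  proof
    assume c4: "card (orb m n x \<inter> C) = 4"
    have "P x \<in> ?S" using PD'[OF x] A4[OF x c4] by blast
    thus False using Seq A4[OF x c4] B_notq[OF x c4] by blast
  next
    assume c2: "card (orb m n x \<inter> C) = 2"
    have DCeq: "orb m n x \<inter> C = {x, n x}"
      using card_subset_eq[OF _ DC_sub[OF x]] finC c2 nfp[OF xV] by (metis card_2_iff finite_Int)
    obtain j where j: "j > 0" "((n \<circ> m)^^j) x = x" using I2.period[OF xV] by blast
    have "((n \<circ> m)^^j) x = n (m (((n \<circ> m)^^(j-1)) x))"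
      using j(1) by (metis comp_apply Suc_diff_1 funpow.simps(2))
    hence "n (m (((n \<circ> m)^^(j-1)) x)) = x" using j(2) by simp
    hence "n (n (m (((n \<circ> m)^^(j-1)) x))) = n x" by simp
    hence "m (((n \<circ> m)^^(j-1)) x) = n x" by (simp only: nn)
    hence ex: "m (((n \<circ> m)^^(j-1)) x) \<in> C" using nC[OF x] by simp
    define i1 where "i1 = (LEAST i. m (((n \<circ> m)^^i) x) \<in> C)"
    have C1: "m (((n \<circ> m)^^i1) x) \<in> C" unfolding i1_def by (rule LeastI[where P="\<lambda>i. m (((n \<circ> m)^^i) x) \<in> C", OF ex])
    have C2: "\<And>i. i < i1 \<Longrightarrow> m (((n \<circ> m)^^i) x) \<notin> C" unfolding i1_def using not_less_Least by blast
    have eq: "i \<le> i1 \<Longrightarrow> ((n' \<circ> m)^^i) x = ((n \<circ> m)^^i) x" for i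
    proof (induction i)
      case 0 then show ?case by simp
    next
      case (Suc i)
      hence nc: "m (((n \<circ> m)^^i) x) \<notin> C" using C2 by simp
      have IH: "((n' \<circ> m)^^i) x = ((n \<circ> m)^^i) x" by (rule Suc.IH[OF Suc_leD[OF Suc.prems]])
      have "((n' \<circ> m)^^Suc i) x = n' (m (((n' \<circ> m)^^i) x))" by (simp only: funpow.simps comp_apply)
      also have "\<dots> = n' (m (((n \<circ> m)^^i) x))" by (simp only: IH)
      also have "\<dots> = n (m (((n \<circ> m)^^i) x))" using n'_nC[OF nc] by simp
      also have "\<dots> = ((n \<circ> m)^^Suc i) x" by (simp only: funpow.simps comp_apply)
      finally show ?case .
    qed
    let ?w = "m (((n \<circ> m)^^i1) x)"
    have w1: "?w \<in> orb m n x \<inter> C" using C1 I2.mt_orb[of i1 x] by blast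
    have "m (((n' \<circ> m)^^i1) x) \<in> orb m n' x" by (rule I2'.mt_orb)
    hence "?w \<in> orb m n' x" by (simp only: eq[OF order_refl])
    hence w2: "?w \<in> ?S" using C1 by blast
    have a1: "?w \<in> {x, n x}" using w1 DCeq by simp
    have a2: "?w \<in> {x, q x}" using w2 Seq by simp
    have "?w = x" using a1 a2 nq[OF xV] by auto
    hence "m (m (((n \<circ> m)^^i1) x)) = m x" by simp
    hence "((n \<circ> m)^^i1) x = m x" by (simp only: mm)
    thus False using I2.t_ne_m[OF xV] by blast
  qed
qed


lemma eq_iter1: assumes "\<forall>i. m (((n \<circ> m)^^i) v) \<notin> C"
  shows "((n' \<circ> m)^^i) v = ((n \<circ> m)^^i) v"
proof (induction i)
  case 0 then show ?case by simp
next
  case (Suc i)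
  have nc: "m (((n \<circ> m)^^i) v) \<notin> C" using assms by blast
  have "((n' \<circ> m)^^Suc i) v = n' (m (((n' \<circ> m)^^i) v))" by (simp only: funpow.simps comp_apply)
  also have "\<dots> = n' (m (((n \<circ> m)^^i) v))" by (simp only: Suc.IH)
  also have "\<dots> = n (m (((n \<circ> m)^^i) v))" using n'_nC[OF nc] by simp
  also have "\<dots> = ((n \<circ> m)^^Suc i) v" by (simp only: funpow.simps comp_apply)
  finally show ?case .
qed

lemma eq_iter2: assumes "\<forall>i. m (((n' \<circ> m)^^i) v) \<notin> C"
  shows "((n' \<circ> m)^^i) v = ((n \<circ> m)^^i) v"
proof (induction i)
  case 0 then show ?case by simp
next
  case (Suc i)
  have nc: "m (((n \<circ> m)^^i) v) \<notin> C" using assms Suc.IH by metis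
  have "((n' \<circ> m)^^Suc i) v = n' (m (((n' \<circ> m)^^i) v))" by (simp only: funpow.simps comp_apply)
  also have "\<dots> = n' (m (((n \<circ> m)^^i) v))" by (simp only: Suc.IH)
  also have "\<dots> = n (m (((n \<circ> m)^^i) v))" using n'_nC[OF nc] by simp
  also have "\<dots> = ((n \<circ> m)^^Suc i) v" by (simp only: funpow.simps comp_apply)
  finally show ?case .
qed

lemma orb_eq_of_iter: assumes "\<And>i. ((n' \<circ> m)^^i) v = ((n \<circ> m)^^i) v"
  shows "orb m n' v = orb m n v"
  unfolding orb_def by (simp only: assms)

lemma out1: assumes "v \<in> V" "orb m n v \<inter> C = {}" shows "orb m n' v = orb m n v"
proof -
  have "\<forall>i. m (((n \<circ> m)^^i) v) \<notin> C" using assms(2) I2.mt_orb by blast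
  thus ?thesis using eq_iter1 orb_eq_of_iter by metis
qed

lemma out2: assumes "v \<in> V" "orb m n' v \<inter> C = {}" shows "orb m n' v = orb m n v"
proof -
  have "\<forall>i. m (((n' \<circ> m)^^i) v) \<notin> C" using assms(2) I2'.mt_orb by blast
  thus ?thesis using eq_iter2 orb_eq_of_iter by metis
qed

lemma Out_eq: "{D \<in> (\<lambda>v. orb m n v) ` V. D \<inter> C = {}} = {D \<in> (\<lambda>v. orb m n' v) ` V. D \<inter> C = {}}"
proof
  show "{D \<in> (\<lambda>v. orb m n v) ` V. D \<inter> C = {}} \<subseteq> {D \<in> (\<lambda>v. orb m n' v) ` V. D \<inter> C = {}}"
  proof
    fix D assume "D \<in> {D \<in> (\<lambda>v. orb m n v) ` V. D \<inter> C = {}}"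
    then obtain v where v: "v \<in> V" "D = orb m n v" "D \<inter> C = {}" by blast
    hence "D = orb m n' v" using out1 by metis
    thus "D \<in> {D \<in> (\<lambda>v. orb m n' v) ` V. D \<inter> C = {}}" using v by blast
  qed
  show "{D \<in> (\<lambda>v. orb m n' v) ` V. D \<inter> C = {}} \<subseteq> {D \<in> (\<lambda>v. orb m n v) ` V. D \<inter> C = {}}"
  proof
    fix D assume "D \<in> {D \<in> (\<lambda>v. orb m n' v) ` V. D \<inter> C = {}}"
    then obtain v where v: "v \<in> V" "D = orb m n' v" "D \<inter> C = {}" by blast
    hence "D = orb m n v" using out2 by metis
    thus "D \<in> {D \<in> (\<lambda>v. orb m n v) ` V. D \<inter> C = {}}" using v by blast
  qed
qed

lemma split_comps: assumes I: "inv2 V m p"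
  shows "card ((\<lambda>v. orb m p v) ` V) = card ((\<lambda>v. orb m p v) ` C) + card {D \<in> (\<lambda>v. orb m p v) ` V. D \<inter> C = {}}"
proof -
  have eq: "(\<lambda>v. orb m p v) ` V = (\<lambda>v. orb m p v) ` C \<union> {D \<in> (\<lambda>v. orb m p v) ` V. D \<inter> C = {}}"
  proof
    show "(\<lambda>v. orb m p v) ` V \<subseteq> (\<lambda>v. orb m p v) ` C \<union> {D \<in> (\<lambda>v. orb m p v) ` V. D \<inter> C = {}}"
    proof
      fix D assume D: "D \<in> (\<lambda>v. orb m p v) ` V"
      then obtain v where v: "v \<in> V" "D = orb m p v" by blast
      show "D \<in> (\<lambda>v. orb m p v) ` C \<union> {D \<in> (\<lambda>v. orb m p v) ` V. D \<inter> C = {}}"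
      proof (cases "D \<inter> C = {}")
        case True thus ?thesis using D by blast
      next
        case False
        then obtain y where y: "y \<in> D" "y \<in> C" by blast
        hence "orb m p y = D" using inv2.orb_same[OF I v(1)] v by simp
        thus ?thesis using y by blast
      qed
    qed
    show "(\<lambda>v. orb m p v) ` C \<union> {D \<in> (\<lambda>v. orb m p v) ` V. D \<inter> C = {}} \<subseteq> (\<lambda>v. orb m p v) ` V"
      using CV by blast
  qed
  have disj: "(\<lambda>v. orb m p v) ` C \<inter> {D \<in> (\<lambda>v. orb m p v) ` V. D \<inter> C = {}} = {}"
    using inv2.x_orb[OF I] by blast
  show ?thesis using eq disj finV finC by (metis (no_types, lifting) card_Un_disjoint finite_Un finite_imageI)
qed

lemma In_le: "card ((\<lambda>v. orb m n v) ` C) \<le> card ((\<lambda>v. orb m n' v) ` C)"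
proof -
  have "card ((\<lambda>v. orb m n v) ` V) \<le> card ((\<lambda>v. orb m n' v) ` V)"
    using locopt comps2 comps2' by simp
  moreover have "card ((\<lambda>v. orb m n v) ` V) = card ((\<lambda>v. orb m n v) ` C) + card {D \<in> (\<lambda>v. orb m n v) ` V. D \<inter> C = {}}"
    by (rule split_comps) unfold_locales
  moreover have "card ((\<lambda>v. orb m n' v) ` V) = card ((\<lambda>v. orb m n' v) ` C) + card {D \<in> (\<lambda>v. orb m n' v) ` V. D \<inter> C = {}}"
    by (rule split_comps) unfold_locales
  ultimately show ?thesis using Out_eq by simp
qed

lemma all4: assumes x: "x \<in> C"
  shows "card (orb m n x \<inter> C) = 4 \<and> card (orb m n' x \<inter> C) = 4"
proof -
  let ?I = "(\<lambda>v. orb m n v) ` C" and ?I' = "(\<lambda>v. orb m n' v) ` C"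
  let ?f = "\<lambda>D. card (D \<inter> C)"
  have s1: "sum ?f ?I = card C" by (rule I2.sumcard[OF CV])
  have s2: "sum ?f ?I' = card C" by (rule I2'.sumcard[OF CV])
  have b1: "sum ?f ?I \<le> card ?I * 4" using sum_bounded_above[of ?I ?f 4] A2 by auto
  have b2: "card ?I' * 4 \<le> sum ?f ?I'" using sum_bounded_below[of ?I' 4 ?f] B by auto
  have le: "card ?I \<le> card ?I'" by (rule In_le)
  have e1: "sum ?f ?I = card ?I * 4" using s1 s2 b1 b2 le by linarith
  have e2: "sum ?f ?I' = card ?I' * 4" using s1 s2 b1 b2 le by linarith
  have c1: "card (orb m n x \<inter> C) = 4"
  proof (rule ccontr)
    assume "card (orb m n x \<inter> C) \<noteq> 4"
    hence "card (orb m n x \<inter> C) < 4" using A2[OF x] by simp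
    hence "sum ?f ?I < sum (\<lambda>D. 4) ?I"
      using sum_strict_mono_ex1[of ?I ?f "\<lambda>D. 4"] finC A2 x by auto
    thus False using e1 by simp
  qed
  have c2: "card (orb m n' x \<inter> C) = 4"
  proof (rule ccontr)
    assume "card (orb m n' x \<inter> C) \<noteq> 4"
    hence "card (orb m n' x \<inter> C) > 4" using B[OF x] by simp
    hence "sum (\<lambda>D. 4) ?I' < sum ?f ?I'"
      using sum_strict_mono_ex1[of ?I' "\<lambda>D. 4" ?f] finC B x by auto
    thus False using e2 by simp
  qed
  show ?thesis using c1 c2 by simp
qed


lemma Pfacts: assumes x: "x \<in> C"
  shows "P x \<in> C \<and> P x \<in> orb m n x \<and> P x \<noteq> x \<and> P x \<noteq> n x \<and> P x \<noteq> q x"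
  using A4[OF x] B_notq[OF x] all4[OF x] by blast

lemma P_inj: "P a = P b \<Longrightarrow> a = b" unfolding P_def by (metis mm nn)

lemma Pn: assumes x: "x \<in> C" shows "P (n x) = n (P x)"
proof -
  have xV: "x \<in> V" using x CV by blast
  let ?D = "orb m n x"
  have F: "P x \<in> C" "P x \<in> ?D" "P x \<noteq> x" "P x \<noteq> n x" using Pfacts[OF x] by auto
  have sub: "{x, n x, P x, n (P x)} \<subseteq> ?D \<inter> C"
    using I2.x_orb I2.orb_p[OF xV] nC x F by auto
  have c: "card {x, n x, P x, n (P x)} = 4"
  proof -
    have "x \<noteq> n x" using nfp[OF xV] by metis
    moreover have "n (P x) \<noteq> x" using F(4) nn by metis
    moreover have "n (P x) \<noteq> n x" using F(3) nn by metis
    moreover have "n (P x) \<noteq> P x" using nfp F(1) CV by blast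
    ultimately show ?thesis using F by simp
  qed
  have eq: "{x, n x, P x, n (P x)} = ?D \<inter> C"
    using card_subset_eq[OF _ sub] c all4[OF x] finC by simp
  have nxD: "n x \<in> ?D" using I2.orb_p[OF xV] I2.x_orb by blast
  have F2: "P (n x) \<in> C" "P (n x) \<in> orb m n (n x)" "P (n x) \<noteq> n x" "P (n x) \<noteq> n (n x)"
    using Pfacts[OF nC[OF x]] by auto
  have "orb m n (n x) = ?D" using I2.orb_same[OF xV nxD] .
  hence "P (n x) \<in> {x, n x, P x, n (P x)}" using eq F2 by blast
  moreover have "P (n x) \<noteq> x" using F2(4) nn by metis
  moreover have "P (n x) \<noteq> P x" using P_inj nfp[OF xV] by metis
  ultimately show ?thesis using F2(3) by blast
qed

lemma Pq: assumes x: "x \<in> C" shows "P (q x) = q (P x)"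
proof -
  have xV: "x \<in> V" using x CV by blast
  let ?D = "orb m n' x"
  have F: "P x \<in> C" "P x \<noteq> x" "P x \<noteq> q x" using Pfacts[OF x] by auto
  have PD: "P x \<in> ?D" by (rule PD'[OF x])
  have qxD: "q x \<in> ?D" using I2'.orb_p[OF xV I2'.x_orb] n'_C[OF x] by simp
  have qPD: "q (P x) \<in> ?D" using I2'.orb_p[OF xV PD] n'_C[OF F(1)] by simp
  have sub: "{x, q x, P x, q (P x)} \<subseteq> ?D \<inter> C"
    using I2'.x_orb qxD PD qPD x qC F(1) by auto
  have c: "card {x, q x, P x, q (P x)} = 4"
  proof -
    have "x \<noteq> q x" using qfp[OF xV] by metis
    moreover have "q (P x) \<noteq> x" using F(3) qq by metis
    moreover have "q (P x) \<noteq> q x" using F(2) qq by metis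
    moreover have "q (P x) \<noteq> P x" using qfp F(1) CV by blast
    ultimately show ?thesis using F by simp
  qed
  have eq: "{x, q x, P x, q (P x)} = ?D \<inter> C"
    using card_subset_eq[OF _ sub] c all4[OF x] finC by simp
  have F2: "P (q x) \<in> C" "P (q x) \<noteq> q x" "P (q x) \<noteq> q (q x)"
    using Pfacts[OF qC[OF x]] by auto
  have "P (q x) \<in> orb m n' (q x)" by (rule PD'[OF qC[OF x]])
  moreover have "orb m n' (q x) = ?D" using I2'.orb_same[OF xV qxD] .
  ultimately have "P (q x) \<in> {x, q x, P x, q (P x)}" using eq F2 by blast
  moreover have "P (q x) \<noteq> x" using F2(3) qq by metis
  moreover have "P (q x) \<noteq> P x" using P_inj qfp[OF xV] by metis
  ultimately show ?thesis using F2(2) by blast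
qed

lemma rhoC: "y \<in> C \<Longrightarrow> ((q \<circ> n)^^i) y \<in> C"
  by (induction i) (auto simp: nC qC)

lemma Prho: assumes y: "y \<in> C" shows "P (((q \<circ> n)^^i) y) = ((q \<circ> n)^^i) (P y)"
proof (induction i)
  case 0 then show ?case by simp
next
  case (Suc i)
  let ?z = "((q \<circ> n)^^i) y"
  have z: "?z \<in> C" by (rule rhoC[OF y])
  have "P (((q \<circ> n)^^Suc i) y) = P (q (n ?z))" by (simp only: funpow.simps comp_apply)
  also have "\<dots> = q (P (n ?z))" using Pq[OF nC[OF z]] .
  also have "\<dots> = q (n (P ?z))" using Pn[OF z] by simp
  also have "\<dots> = q (n (((q \<circ> n)^^i) (P y)))" by (simp only: Suc.IH)
  also have "\<dots> = ((q \<circ> n)^^Suc i) (P y)" by (simp only: funpow.simps comp_apply)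
  finally show ?case .
qed

lemma L: "((q \<circ> n)^^i) (n (((q \<circ> n)^^i) z)) = n z"
proof (induction i arbitrary: z)
  case 0 then show ?case by simp
next
  case (Suc i)
  let ?w = "((q \<circ> n)^^i) z"
  have i1: "((q \<circ> n)^^Suc i) z = (q \<circ> n) ?w" by (simp only: funpow.simps comp_apply)
  have i2: "((q \<circ> n)^^Suc i) u = ((q \<circ> n)^^i) ((q \<circ> n) u)" for u
    by (simp only: funpow_Suc_right comp_apply)
  have i3: "(q \<circ> n) (n ((q \<circ> n) ?w)) = n ?w" by (simp add: nn qq)
  have "((q \<circ> n)^^Suc i) (n (((q \<circ> n)^^Suc i) z)) = ((q \<circ> n)^^Suc i) (n ((q \<circ> n) ?w))"
    by (simp only: i1)
  also have "\<dots> = ((q \<circ> n)^^i) ((q \<circ> n) (n ((q \<circ> n) ?w)))" by (rule i2)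
  also have "\<dots> = ((q \<circ> n)^^i) (n ?w)" by (simp only: i3)
  also have "\<dots> = n z" by (rule Suc.IH)
  finally show ?case .
qed

lemma final: False
proof -
  obtain x0 where x0: "x0 \<in> V" "C = orb n q x0" using Cx0 by blast
  have x0C: "x0 \<in> C" using x0 I1.x_orb by blast
  have "P x0 \<in> orb n q x0" using Pfacts[OF x0C] x0 by blast
  then obtain j where j: "P x0 = ((q \<circ> n)^^j) x0 \<or> P x0 = n (((q \<circ> n)^^j) x0)"
    unfolding orb_def by blast
  obtain A where A: "\<And>x y. {x,y} \<in> E \<Longrightarrow> (x \<in> A \<longleftrightarrow> y \<notin> A)" using bipE by blast
  have rV: "((q \<circ> n)^^i) x0 \<in> V" for i using rhoC[OF x0C] CV by blast
  show False
  proof (cases "P x0 = ((q \<circ> n)^^j) x0")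
    case True
    have side: "((q \<circ> n)^^i) x0 \<in> A \<longleftrightarrow> x0 \<in> A" for i
    proof (induction i)
      case 0 then show ?case by simp
    next
      case (Suc i)
      let ?z = "((q \<circ> n)^^i) x0"
      have zV: "?z \<in> V" by (rule rV)
      have "?z \<in> A \<longleftrightarrow> n ?z \<notin> A" using A[OF nE[OF zV]] .
      moreover have "n ?z \<in> A \<longleftrightarrow> q (n ?z) \<notin> A" using A[OF qE[OF nV[OF zV]]] .
      moreover have e: "((q \<circ> n)^^Suc i) x0 = q (n ?z)" by (simp only: funpow.simps comp_apply)
      ultimately show ?case unfolding e using Suc.IH by blast
    qed
    have "x0 \<in> A \<longleftrightarrow> m x0 \<notin> A" using A[OF mE[OF x0(1)]] .
    moreover have "m x0 \<in> A \<longleftrightarrow> n (m x0) \<notin> A" using A[OF nE[OF mV[OF x0(1)]]] .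
    moreover have "n (m x0) \<in> A \<longleftrightarrow> P x0 \<notin> A"
      unfolding P_def using A[OF mE[OF nV[OF mV[OF x0(1)]]]] .
    ultimately have "x0 \<in> A \<longleftrightarrow> P x0 \<notin> A" by blast
    thus False using side[of j] True by simp
  next
    case False
    hence Pj: "P x0 = n (((q \<circ> n)^^j) x0)" using j by blast
    obtain i where "j = 2 * i \<or> j = 2 * i + 1" by (metis oddE evenE)
    then show False
    proof
      assume ji: "j = 2 * i"
      let ?y = "((q \<circ> n)^^i) x0"
      have yC: "?y \<in> C" by (rule rhoC[OF x0C])
      have jj: "j = i + i" using ji by simp
      have "P ?y = ((q \<circ> n)^^i) (P x0)" by (rule Prho[OF x0C])
      also have "P x0 = n (((q \<circ> n)^^(i + i)) x0)" by (simp only: Pj jj)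
      finally have "P ?y = ((q \<circ> n)^^i) (n (((q \<circ> n)^^(i + i)) x0))" .
      also have "((q \<circ> n)^^(i + i)) x0 = ((q \<circ> n)^^i) ?y" by (simp add: funpow_add)
      finally have "P ?y = ((q \<circ> n)^^i) (n (((q \<circ> n)^^i) ?y))" .
      hence "P ?y = n ?y" by (simp only: L)
      thus False using Pfacts[OF yC] by simp
    next
      assume ji: "j = 2 * i + 1"
      let ?w = "((q \<circ> n)^^i) x0"
      let ?y = "((q \<circ> n)^^Suc i) x0"
      have yC: "?y \<in> C" by (rule rhoC[OF x0C])
      have jj: "j = Suc i + i" using ji by simp
      have "P ?y = ((q \<circ> n)^^Suc i) (P x0)" by (rule Prho[OF x0C])
      also have "P x0 = n (((q \<circ> n)^^(Suc i + i)) x0)" by (simp only: Pj jj)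
      finally have "P ?y = ((q \<circ> n)^^Suc i) (n (((q \<circ> n)^^(Suc i + i)) x0))" .
      also have "((q \<circ> n)^^(Suc i + i)) x0 = ((q \<circ> n)^^Suc i) ?w" by (simp only: funpow_add comp_apply)
      finally have "P ?y = ((q \<circ> n)^^Suc i) (n (((q \<circ> n)^^Suc i) ?w))" .
      hence e: "P ?y = n ?w" by (simp only: L)
      have "q ?y = q (q (n ?w))" by (simp only: funpow.simps comp_apply)
      hence "q ?y = n ?w" by (simp only: qq)
      thus False using e Pfacts[OF yC] by simp
    qed
  qed
qed

end

context setting begin

lemma main: "\<forall>C\<in>components V F1. \<exists>D\<in>components V F2. card D \<ge> 10 \<and> card (C \<inter> D) \<ge> 4"
proof
  fix C assume C: "C \<in> components V F1"
  show "\<exists>D\<in>components V F2. card D \<ge> 10 \<and> card (C \<inter> D) \<ge> 4"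
  proof (rule ccontr)
    assume h: "\<not> (\<exists>D\<in>components V F2. card D \<ge> 10 \<and> card (C \<inter> D) \<ge> 4)"
    interpret W: withC V E F1 F2 C
      by (intro withC.intro setting_axioms withC_axioms.intro C h)
    show False by (rule W.final)
  qed
qed

end

theorem lemma3:
  fixes V :: "'a set" and E F1 F2 :: "'a set set"
  assumes "simple_graph V E" and "cubic V E" and "bipartite V E"
    and "\<not> (\<exists>S. potential_4_cycle V E S)"
    and "two_factor V E F1"
    and "\<forall>C\<in>components V F1. chordless E F1 C"
    and "locally_optimal V E F1 F2"
  shows "\<forall>C\<in>components V F1. \<exists>D\<in>components V F2. card D \<ge> 10 \<and> card (C \<inter> D) \<ge> 4"
  by (rule setting.main) (rule setting.intro; fact)

end
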